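(* Let $S=\{R_0,\dots,R_d\}$ be a scheme on $X$, $\mathbb F$ a field, $x\in X$, $\mathcal T=\mathcal T(x)$, $E_a^*=E_a^*(x)$, and let $\mathrm{Rad}(\mathcal T)$ be the Jacobson radical of $\mathcal T$. Suppose that $E_a^*ME_b^*=O$ for all $M\in\mathrm{Rad}(\mathcal T)$ and all distinct $R_a,R_b\in S$. Then $\mathcal T$ is semisimple if and only if the $\mathbb F$-algebra $E_c^*\mathcal TE_c^*=\{E_c^*ME_c^*:M\in\mathcal T\}$ (with identity $E_c^*$) is semisimple for every $R_c\in S$.
   Context: Let $X$ be a nonempty finite set. A scheme of class $d$ on $X$ is a partition $S=\{R_0,\dots,R_d\}$ of $X\times X$ into nonempty sets such that $R_0=\{(b,b):b\in X\}$; for each $c$ there is $c'$ with $R_{c'}=\{(f,e):(e,f)\in R_c\}$; and for all $i,j,k$ the intersection number $p_{ij}^k=|\{\ell\in X:(m,\ell)\in R_i,(\ell,n)\in R_j\}|$ does not depend on $(m,n)\in R_k$. For $y\in X$, $yR_a=\{z:(y,z)\in R_a\}$. $A_a\in M_X(\mathbb F)$ is the $(0,1)$ adjacency matrix of $R_a$ and $E_a^*(y)$ is the diagonal $(0,1)$-matrix with ones exactly at positions indexed by $yR_a$. The Terwilliger $\mathbb F$-algebra $\mathcal T(y)$ is the $\mathbb F$-subalgebra of $M_X(\mathbb F)$ generated by $A_0,\dots,A_d,E_0^*(y),\dots,E_d^*(y)$. $O$ is the zero matrix. *)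

theory Defs
  imports Main
begin

text \<open>Square matrices indexed by the finite set X (modelled as a finite type 'x)
  with entries in a field 'f.\<close>
type_synonym ('x, 'f) sqm = "'x \<Rightarrow> 'x \<Rightarrow> 'f"

definition mmul :: "('x::finite, 'f::field) sqm \<Rightarrow> ('x, 'f) sqm \<Rightarrow> ('x, 'f) sqm" where
  "mmul A B = (\<lambda>i j. \<Sum>k\<in>UNIV. A i k * B k j)"

definition madd :: "('x, 'f::field) sqm \<Rightarrow> ('x, 'f) sqm \<Rightarrow> ('x, 'f) sqm" where
  "madd A B = (\<lambda>i j. A i j + B i j)"

definition msmult :: "'f::field \<Rightarrow> ('x, 'f) sqm \<Rightarrow> ('x, 'f) sqm" where
  "msmult c A = (\<lambda>i j. c * A i j)"

definition mzero :: "('x, 'f::field) sqm" where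
  "mzero = (\<lambda>i j. 0)"

definition mone :: "('x, 'f::field) sqm" where
  "mone = (\<lambda>i j. if i = j then 1 else 0)"

definition is_scheme :: "nat \<Rightarrow> (nat \<Rightarrow> ('x::finite \<times> 'x) set) \<Rightarrow> bool" where
  "is_scheme d R \<longleftrightarrow>
     (\<forall>a\<le>d. R a \<noteq> {}) \<and>
     (\<forall>a\<le>d. \<forall>b\<le>d. a \<noteq> b \<longrightarrow> R a \<inter> R b = {}) \<and>
     (\<Union>a\<in>{..d}. R a) = UNIV \<and>
     R 0 = {(b, b) | b. True} \<and>
     (\<forall>c\<le>d. \<exists>c'\<le>d. R c' = {(f, e). (e, f) \<in> R c}) \<and>
     (\<forall>i\<le>d. \<forall>j\<le>d. \<forall>k\<le>d. \<exists>p::nat. \<forall>m n. (m, n) \<in> R k \<longrightarrow>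
         card {l. (m, l) \<in> R i \<and> (l, n) \<in> R j} = p)"

definition adj :: "(nat \<Rightarrow> ('x \<times> 'x) set) \<Rightarrow> nat \<Rightarrow> ('x, 'f::field) sqm" where
  "adj R a = (\<lambda>y z. if (y, z) \<in> R a then 1 else 0)"

definition Estar :: "(nat \<Rightarrow> ('x \<times> 'x) set) \<Rightarrow> 'x \<Rightarrow> nat \<Rightarrow> ('x, 'f::field) sqm" where
  "Estar R y a = (\<lambda>u v. if u = v \<and> (y, u) \<in> R a then 1 else 0)"

inductive_set alg_gen :: "('x::finite, 'f::field) sqm set \<Rightarrow> ('x, 'f) sqm set"
  for G :: "('x, 'f) sqm set" where
  gen: "M \<in> G \<Longrightarrow> M \<in> alg_gen G"
| one: "mone \<in> alg_gen G"
| add: "M \<in> alg_gen G \<Longrightarrow> N \<in> alg_gen G \<Longrightarrow> madd M N \<in> alg_gen G"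
| smult: "M \<in> alg_gen G \<Longrightarrow> msmult c M \<in> alg_gen G"
| mul: "M \<in> alg_gen G \<Longrightarrow> N \<in> alg_gen G \<Longrightarrow> mmul M N \<in> alg_gen G"

definition terwilliger :: "nat \<Rightarrow> (nat \<Rightarrow> ('x::finite \<times> 'x) set) \<Rightarrow> 'x \<Rightarrow> ('x, 'f::field) sqm set" where
  "terwilliger d R y = alg_gen ({adj R a | a. a \<le> d} \<union> {Estar R y a | a. a \<le> d})"

definition corner :: "('x::finite, 'f::field) sqm \<Rightarrow> ('x, 'f) sqm set \<Rightarrow> ('x, 'f) sqm set" where
  "corner E T = {mmul (mmul E M) E | M. M \<in> T}"

definition left_ideal :: "('x::finite, 'f::field) sqm set \<Rightarrow> ('x, 'f) sqm set \<Rightarrow> bool" where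
  "left_ideal A L \<longleftrightarrow> L \<subseteq> A \<and> mzero \<in> L \<and>
     (\<forall>M\<in>L. \<forall>N\<in>L. madd M N \<in> L) \<and>
     (\<forall>c. \<forall>M\<in>L. msmult c M \<in> L) \<and>
     (\<forall>N\<in>A. \<forall>M\<in>L. mmul N M \<in> L)"

definition maximal_left_ideal :: "('x::finite, 'f::field) sqm set \<Rightarrow> ('x, 'f) sqm set \<Rightarrow> bool" where
  "maximal_left_ideal A L \<longleftrightarrow> left_ideal A L \<and> L \<noteq> A \<and>
     (\<forall>L'. left_ideal A L' \<and> L \<subseteq> L' \<and> L' \<noteq> A \<longrightarrow> L' = L)"

definition jacobson_rad :: "('x::finite, 'f::field) sqm set \<Rightarrow> ('x, 'f) sqm set" where
  "jacobson_rad A = A \<inter> \<Inter>{L. maximal_left_ideal A L}"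

text \<open>A finite-dimensional algebra is semisimple iff its Jacobson radical is zero.\<close>
definition semisimple :: "('x::finite, 'f::field) sqm set \<Rightarrow> bool" where
  "semisimple A \<longleftrightarrow> jacobson_rad A = {mzero}"

end

theory Submission
  imports Defs
begin

lemma madd_app[simp]: "madd M N i j = M i j + N i j" by (simp add: madd_def)
lemma msmult_app[simp]: "msmult c M i j = c * M i j" by (simp add: msmult_def)
lemma mzero_app[simp]: "mzero i j = 0" by (simp add: mzero_def)

lemma mmul_assoc: "mmul (mmul A B) C = mmul A (mmul B C)"
proof (intro ext)
  fix i j
  have "mmul (mmul A B) C i j = (\<Sum>k\<in>UNIV. \<Sum>l\<in>UNIV. A i l * B l k * C k j)"
    by (simp add: mmul_def sum_distrib_right)
  also have "\<dots> = (\<Sum>l\<in>UNIV. \<Sum>k\<in>UNIV. A i l * B l k * C k j)" by (rule sum.swap)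
  also have "\<dots> = mmul A (mmul B C) i j"
    by (simp add: mmul_def sum_distrib_left mult.assoc)
  finally show "mmul (mmul A B) C i j = mmul A (mmul B C) i j" .
qed

lemma mmul_madd_left: "mmul (madd A B) C = madd (mmul A C) (mmul B C)"
  by (simp add: mmul_def madd_def distrib_right sum.distrib)
lemma mmul_madd_right: "mmul C (madd A B) = madd (mmul C A) (mmul C B)"
  by (simp add: mmul_def madd_def distrib_left sum.distrib)
lemma mmul_msmult_left: "mmul (msmult c A) B = msmult c (mmul A B)"
  by (simp add: mmul_def msmult_def sum_distrib_left mult.assoc)
lemma mmul_msmult_right: "mmul A (msmult c B) = msmult c (mmul A B)"
  by (simp add: mmul_def msmult_def sum_distrib_left mult.assoc mult.left_commute)
lemma mmul_mzero_left[simp]: "mmul mzero A = mzero"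
  by (simp add: mmul_def mzero_def)
lemma mmul_mzero_right[simp]: "mmul A mzero = mzero"
  by (simp add: mmul_def mzero_def)
lemma mmul_diag_left: "mmul (\<lambda>u v. if u = v then f u else 0) M = (\<lambda>i j. f i * M i j)"
proof (intro ext)
  fix i j
  have "mmul (\<lambda>u v. if u = v then f u else 0) M i j = (\<Sum>k\<in>UNIV. if k = i then f i * M i j else 0)"
    unfolding mmul_def by (intro sum.cong) auto
  thus "mmul (\<lambda>u v. if u = v then f u else 0) M i j = f i * M i j" by simp
qed
lemma mmul_diag_right: "mmul M (\<lambda>u v. if u = v then f u else 0) = (\<lambda>i j. M i j * f j)"
proof (intro ext)
  fix i j
  have "mmul M (\<lambda>u v. if u = v then f u else 0) i j = (\<Sum>k\<in>UNIV. if k = j then M i j * f j else 0)"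
    unfolding mmul_def by (intro sum.cong) auto
  thus "mmul M (\<lambda>u v. if u = v then f u else 0) i j = M i j * f j" by simp
qed
lemma mone_diag: "mone = (\<lambda>u v. if u = v then 1 else 0)" by (simp add: mone_def)
lemma mmul_mone_left[simp]: "mmul mone A = A"
  unfolding mone_diag mmul_diag_left by simp
lemma mmul_mone_right[simp]: "mmul A mone = A"
  unfolding mone_diag mmul_diag_right by simp

lemmas nrm = mmul_assoc mmul_madd_left mmul_madd_right mmul_msmult_left mmul_msmult_right

definition qr :: "('x::finite, 'f::field) sqm set \<Rightarrow> ('x, 'f) sqm \<Rightarrow> ('x, 'f) sqm set" where
  "qr A u = {a \<in> A. \<forall>b\<in>A. \<exists>c\<in>A. mmul c (madd u (msmult (-1) (mmul b a))) = u}"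

locale ualg =
  fixes A :: "('x::finite, 'f::field) sqm set" and u :: "('x, 'f) sqm"
  assumes u_in: "u \<in> A"
    and add_cl: "M \<in> A \<Longrightarrow> N \<in> A \<Longrightarrow> madd M N \<in> A"
    and sm_cl: "M \<in> A \<Longrightarrow> msmult c M \<in> A"
    and mul_cl: "M \<in> A \<Longrightarrow> N \<in> A \<Longrightarrow> mmul M N \<in> A"
    and u_left: "M \<in> A \<Longrightarrow> mmul u M = M"
    and u_right: "M \<in> A \<Longrightarrow> mmul M u = M"
begin

lemma zero_in: "mzero \<in> A"
proof -
  have "msmult 0 u = mzero" by (simp add: fun_eq_iff)
  thus ?thesis using sm_cl[OF u_in, of 0] by simp
qed

lemma u_ideal: "left_ideal A L \<Longrightarrow> u \<in> L \<Longrightarrow> L = A"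
proof -
  assume li: "left_ideal A L" and uL: "u \<in> L"
  have "N \<in> L" if N: "N \<in> A" for N
  proof -
    have "mmul N u \<in> L" using li N uL unfolding left_ideal_def by blast
    thus ?thesis using u_right[OF N] by simp
  qed
  moreover have "L \<subseteq> A" using li unfolding left_ideal_def by blast
  ultimately show "L = A" by blast
qed

lemma zorn_ext:
  assumes I: "left_ideal A I" and uI: "u \<notin> I"
  shows "\<exists>L. maximal_left_ideal A L \<and> I \<subseteq> L"
proof -
  let ?F = "{L. left_ideal A L \<and> u \<notin> L \<and> I \<subseteq> L}"
  have "\<exists>M\<in>?F. \<forall>X\<in>?F. M \<subseteq> X \<longrightarrow> X = M"
  proof (rule subset_Zorn_nonempty)
    show "?F \<noteq> {}" using I uI by blast
  next
    fix C assume ne: "C \<noteq> {}" and ch: "subset.chain ?F C"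
    hence CF: "C \<subseteq> ?F" and cmp: "\<forall>X\<in>C. \<forall>Y\<in>C. X \<subseteq> Y \<or> Y \<subseteq> X"
      by (auto simp: subset_chain_def)
    have li: "left_ideal A (\<Union>C)"
      unfolding left_ideal_def
    proof (intro conjI ballI allI)
      show "\<Union>C \<subseteq> A" using CF by (auto simp: left_ideal_def)
      show "mzero \<in> \<Union>C" using CF ne by (auto simp: left_ideal_def)
    next
      fix M N assume "M \<in> \<Union>C" "N \<in> \<Union>C"
      then obtain X Y where X: "X \<in> C" "M \<in> X" and Y: "Y \<in> C" "N \<in> Y" by blast
      from cmp X Y have "X \<subseteq> Y \<or> Y \<subseteq> X" by blast
      have lX: "left_ideal A X" and lY: "left_ideal A Y" using X Y CF by auto
      show "madd M N \<in> \<Union>C"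
      proof (cases "X \<subseteq> Y")
        case True
        hence "madd M N \<in> Y" using lY X Y unfolding left_ideal_def by blast
        thus ?thesis using Y by blast
      next
        case False
        hence "Y \<subseteq> X" using cmp X Y by blast
        hence "madd M N \<in> X" using lX X Y unfolding left_ideal_def by blast
        thus ?thesis using X by blast
      qed
    next
      fix c M assume "M \<in> \<Union>C"
      then obtain X where X: "X \<in> C" "M \<in> X" by blast
      hence "left_ideal A X" using CF by auto
      hence "msmult c M \<in> X" using X unfolding left_ideal_def by blast
      thus "msmult c M \<in> \<Union>C" using X by blast
    next
      fix N M assume N: "N \<in> A" and "M \<in> \<Union>C"
      then obtain X where X: "X \<in> C" "M \<in> X" by blast
      hence "left_ideal A X" using CF by auto
      hence "mmul N M \<in> X" using X N unfolding left_ideal_def by blast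
      thus "mmul N M \<in> \<Union>C" using X by blast
    qed
    moreover have "u \<notin> \<Union>C" using CF by blast
    moreover have "I \<subseteq> \<Union>C" using CF ne by blast
    ultimately show "\<Union>C \<in> ?F" by blast
  qed
  then obtain M where MF: "M \<in> ?F" and mx: "\<forall>X\<in>?F. M \<subseteq> X \<longrightarrow> X = M" by blast
  have "maximal_left_ideal A M"
    unfolding maximal_left_ideal_def
  proof (intro conjI allI impI)
    show "left_ideal A M" using MF by blast
    show "M \<noteq> A" using MF u_in by blast
  next
    fix L' assume h: "left_ideal A L' \<and> M \<subseteq> L' \<and> L' \<noteq> A"
    hence "u \<notin> L'" using u_ideal by blast
    thus "L' = M" using h MF mx by blast
  qed
  thus ?thesis using MF by blast
qed


lemma zero_qr: "mzero \<in> qr A u"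
  unfolding qr_def
proof (intro CollectI conjI ballI bexI)
  show "mzero \<in> A" by (rule zero_in)
  fix b assume "b \<in> A"
  have "madd u (msmult (-1) (mmul b mzero)) = u" by (simp add: fun_eq_iff)
  thus "mmul u (madd u (msmult (-1) (mmul b mzero))) = u" using u_left[OF u_in] by simp
  show "u \<in> A" by (rule u_in)
qed

lemma J_sub_qr: "jacobson_rad A \<subseteq> qr A u"
proof
  fix a assume a: "a \<in> jacobson_rad A"
  hence aA: "a \<in> A" and aL: "\<And>L. maximal_left_ideal A L \<Longrightarrow> a \<in> L"
    unfolding jacobson_rad_def by auto
  show "a \<in> qr A u" unfolding qr_def
  proof (intro CollectI conjI ballI aA)
    fix b assume bA: "b \<in> A"
    let ?y = "madd u (msmult (-1) (mmul b a))"
    have yA: "?y \<in> A" using u_in bA aA by (intro add_cl sm_cl mul_cl)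
    show "\<exists>c\<in>A. mmul c ?y = u"
    proof (rule ccontr)
      assume nc: "\<not> (\<exists>c\<in>A. mmul c ?y = u)"
      let ?I = "{mmul c ?y | c. c \<in> A}"
      have li: "left_ideal A ?I"
        unfolding left_ideal_def
      proof (intro conjI ballI allI)
        show "?I \<subseteq> A" using yA mul_cl by blast
        show "mzero \<in> ?I" using zero_in by force
      next
        fix M N assume "M \<in> ?I" "N \<in> ?I"
        then obtain c1 c2 where "c1 \<in> A" "c2 \<in> A" "M = mmul c1 ?y" "N = mmul c2 ?y" by blast
        moreover have "madd (mmul c1 ?y) (mmul c2 ?y) = mmul (madd c1 c2) ?y" by (simp add: mmul_madd_left)
        ultimately show "madd M N \<in> ?I" using add_cl by blast
      next
        fix k M assume "M \<in> ?I"
        then obtain c1 where "c1 \<in> A" "M = mmul c1 ?y" by blast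
        moreover have "msmult k (mmul c1 ?y) = mmul (msmult k c1) ?y" by (simp add: mmul_msmult_left)
        ultimately show "msmult k M \<in> ?I" using sm_cl by blast
      next
        fix N M assume N: "N \<in> A" and "M \<in> ?I"
        then obtain c1 where "c1 \<in> A" "M = mmul c1 ?y" by blast
        moreover have "mmul N (mmul c1 ?y) = mmul (mmul N c1) ?y" by (simp add: mmul_assoc)
        ultimately show "mmul N M \<in> ?I" using mul_cl N by blast
      qed
      have "u \<notin> ?I" using nc by force
      then obtain L where mL: "maximal_left_ideal A L" and IL: "?I \<subseteq> L" using zorn_ext[OF li] by blast
      have liL: "left_ideal A L" using mL unfolding maximal_left_ideal_def by blast
      have "?y \<in> ?I" using u_in u_left[OF yA] by force
      hence yL: "?y \<in> L" using IL by blast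
      have "mmul b a \<in> L" using aL[OF mL] bA liL unfolding left_ideal_def by blast
      hence "madd ?y (mmul b a) \<in> L" using yL liL unfolding left_ideal_def by blast
      moreover have "madd ?y (mmul b a) = u" by (simp add: fun_eq_iff)
      ultimately have "u \<in> L" by simp
      hence "L = A" using u_ideal liL by blast
      thus False using mL unfolding maximal_left_ideal_def by blast
    qed
  qed
qed

lemma qr_sub_J: "qr A u \<subseteq> jacobson_rad A"
proof
  fix a assume a: "a \<in> qr A u"
  hence aA: "a \<in> A" and hq: "\<And>b. b \<in> A \<Longrightarrow> \<exists>c\<in>A. mmul c (madd u (msmult (-1) (mmul b a))) = u"
    unfolding qr_def by auto
  have "a \<in> L" if mL: "maximal_left_ideal A L" for L
  proof (rule ccontr)
    assume naL: "a \<notin> L"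
    have liL: "left_ideal A L" using mL unfolding maximal_left_ideal_def by blast
    let ?L = "{madd l (mmul b a) | l b. l \<in> L \<and> b \<in> A}"
    have memL: "\<And>x l b. l \<in> L \<Longrightarrow> b \<in> A \<Longrightarrow> x = madd l (mmul b a) \<Longrightarrow> x \<in> ?L" by blast
    have mzL: "mzero \<in> L" using liL unfolding left_ideal_def by blast
    have mx: "\<And>L'. left_ideal A L' \<Longrightarrow> L \<subseteq> L' \<Longrightarrow> L' \<noteq> A \<Longrightarrow> L' = L"
      using mL unfolding maximal_left_ideal_def by blast
    have li: "left_ideal A ?L"
      unfolding left_ideal_def
    proof (intro conjI ballI allI)
      show "?L \<subseteq> A"
      proof
        fix M assume "M \<in> ?L"
        then obtain l b where h: "l \<in> L" "b \<in> A" "M = madd l (mmul b a)" by blast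
        have "l \<in> A" using h(1) liL unfolding left_ideal_def by blast
        thus "M \<in> A" using h add_cl mul_cl aA by simp
      qed
      have "mzero = madd mzero (mmul mzero a)" by (simp add: fun_eq_iff)
      thus "mzero \<in> ?L" using memL[OF mzL zero_in] by blast
    next
      fix M N assume "M \<in> ?L" "N \<in> ?L"
      then obtain l1 b1 l2 b2 where h: "l1 \<in> L" "b1 \<in> A" "l2 \<in> L" "b2 \<in> A"
        "M = madd l1 (mmul b1 a)" "N = madd l2 (mmul b2 a)" by blast
      have "madd M N = madd (madd l1 l2) (mmul (madd b1 b2) a)"
        unfolding h by (simp add: mmul_madd_left fun_eq_iff algebra_simps)
      moreover have "madd l1 l2 \<in> L" using h liL unfolding left_ideal_def by blast
      ultimately show "madd M N \<in> ?L" using add_cl[OF h(2) h(4)] memL by blast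
    next
      fix k M assume "M \<in> ?L"
      then obtain l1 b1 where h: "l1 \<in> L" "b1 \<in> A" "M = madd l1 (mmul b1 a)" by blast
      have "msmult k M = madd (msmult k l1) (mmul (msmult k b1) a)"
        unfolding h by (simp add: mmul_msmult_left fun_eq_iff algebra_simps)
      moreover have "msmult k l1 \<in> L" using h liL unfolding left_ideal_def by blast
      ultimately show "msmult k M \<in> ?L" using sm_cl[OF h(2)] memL by blast
    next
      fix N M assume N: "N \<in> A" and "M \<in> ?L"
      then obtain l1 b1 where h: "l1 \<in> L" "b1 \<in> A" "M = madd l1 (mmul b1 a)" by blast
      have "mmul N M = madd (mmul N l1) (mmul (mmul N b1) a)"
        unfolding h by (simp add: mmul_madd_right mmul_assoc)
      moreover have "mmul N l1 \<in> L" using h N liL unfolding left_ideal_def by blast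
      ultimately show "mmul N M \<in> ?L" using mul_cl[OF N h(2)] memL by blast
    qed
    have "L \<subseteq> ?L"
    proof
      fix l assume lL: "l \<in> L"
      show "l \<in> ?L" by (rule memL[OF lL zero_in]) (simp add: fun_eq_iff)
    qed
    have "a \<in> ?L" by (rule memL[OF mzL u_in]) (simp add: fun_eq_iff u_left[OF aA])
    hence "?L \<noteq> L" using naL by blast
    hence "?L = A" using mx[OF li \<open>L \<subseteq> ?L\<close>] by blast
    hence "u \<in> ?L" using u_in by simp
    then obtain l b where lb: "l \<in> L" "b \<in> A" "u = madd l (mmul b a)" by blast
    obtain c where c: "c \<in> A" "mmul c (madd u (msmult (-1) (mmul b a))) = u" using hq[OF lb(2)] by blast
    have "madd u (msmult (-1) (mmul b a)) = l" using lb(3) by (simp add: fun_eq_iff)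
    hence "mmul c l = u" using c by simp
    moreover have "mmul c l \<in> L" using c(1) lb(1) liL unfolding left_ideal_def by blast
    ultimately have "u \<in> L" by simp
    hence "L = A" using u_ideal liL by blast
    thus False using mL unfolding maximal_left_ideal_def by blast
  qed
  thus "a \<in> jacobson_rad A" using aA unfolding jacobson_rad_def by blast
qed

lemma J_eq: "jacobson_rad A = qr A u"
  using J_sub_qr qr_sub_J by blast

end

lemma swap_inv:
  assumes "mmul c (madd mone (msmult (-1) (mmul y x))) = mone"
  shows "mmul (madd mone (mmul x (mmul c y))) (madd mone (msmult (-1) (mmul x y))) = mone"
proof -
  have h: "mmul x (mmul (mmul c (madd mone (msmult (-1) (mmul y x)))) y) = mmul x y"
    using assms by simp
  show ?thesis using h by (simp add: nrm fun_eq_iff algebra_simps)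
qed


lemma ualg_corner:
  assumes ua: "ualg A mone" and eA: "e \<in> A" and ee: "mmul e e = e"
  shows "ualg (corner e A) e"
proof -
  interpret ualg A mone by (rule ua)
  have ee2: "\<And>X. mmul e (mmul e X) = mmul e X" using ee by (simp add: mmul_assoc[symmetric])
  show ?thesis
  proof
    show "e \<in> corner e A" unfolding corner_def using u_in ee by force
  next
    fix M N assume "M \<in> corner e A" "N \<in> corner e A"
    then obtain M0 N0 where h: "M0 \<in> A" "N0 \<in> A" "M = mmul (mmul e M0) e" "N = mmul (mmul e N0) e"
      unfolding corner_def by blast
    have "madd M N = mmul (mmul e (madd M0 N0)) e" unfolding h by (simp add: nrm)
    thus "madd M N \<in> corner e A" unfolding corner_def using add_cl[OF h(1,2)] by blast
    have "mmul M N = mmul (mmul e (mmul M0 (mmul e N0))) e" unfolding h by (simp add: nrm ee ee2)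
    thus "mmul M N \<in> corner e A" unfolding corner_def using mul_cl[OF h(1) mul_cl[OF eA h(2)]] by blast
  next
    fix M c assume "M \<in> corner e A"
    then obtain M0 where h: "M0 \<in> A" "M = mmul (mmul e M0) e"
      unfolding corner_def by blast
    have "msmult c M = mmul (mmul e (msmult c M0)) e" unfolding h by (simp add: nrm)
    thus "msmult c M \<in> corner e A" unfolding corner_def using sm_cl[OF h(1)] by blast
    show "mmul e M = M" unfolding h by (simp add: nrm ee ee2)
    show "mmul M e = M" unfolding h by (simp add: nrm ee ee2)
  qed
qed

lemma corner_sub: "ualg A mone \<Longrightarrow> e \<in> A \<Longrightarrow> corner e A \<subseteq> A"
  unfolding corner_def by (auto intro: ualg.mul_cl)

lemma corner_qr1:
  assumes ua: "ualg A mone" and eA: "e \<in> A" and ee: "mmul e e = e" and a: "a \<in> qr A mone"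
  shows "mmul (mmul e a) e \<in> qr (corner e A) e"
proof -
  interpret ualg A mone by (rule ua)
  have ee2: "\<And>X. mmul e (mmul e X) = mmul e X" using ee by (simp add: mmul_assoc[symmetric])
  have aA: "a \<in> A" and hq: "\<And>b. b \<in> A \<Longrightarrow> \<exists>c\<in>A. mmul c (madd mone (msmult (-1) (mmul b a))) = mone"
    using a unfolding qr_def by auto
  show ?thesis unfolding qr_def
  proof (intro CollectI conjI ballI)
    show "mmul (mmul e a) e \<in> corner e A" unfolding corner_def using aA by blast
    fix b' assume "b' \<in> corner e A"
    then obtain b where b: "b \<in> A" "b' = mmul (mmul e b) e" unfolding corner_def by blast
    have BA: "b' \<in> A" using b eA mul_cl by simp
    obtain c where c: "c \<in> A" "mmul c (madd mone (msmult (-1) (mmul b' a))) = mone" using hq[OF BA] by blast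
    have h: "mmul e (mmul (mmul c (madd mone (msmult (-1) (mmul b' a)))) e) = e"
      using c(2) ee by simp
    have "mmul (mmul (mmul e c) e) (madd e (msmult (-1) (mmul b' (mmul (mmul e a) e))))
        = mmul e (mmul (mmul c (madd mone (msmult (-1) (mmul b' a)))) e)"
      unfolding b(2) by (simp add: nrm ee ee2)
    hence "mmul (mmul (mmul e c) e) (madd e (msmult (-1) (mmul b' (mmul (mmul e a) e)))) = e"
      using h by simp
    moreover have "mmul (mmul e c) e \<in> corner e A" unfolding corner_def using c(1) by blast
    ultimately show "\<exists>c\<in>corner e A. mmul c (madd e (msmult (-1) (mmul b' (mmul (mmul e a) e)))) = e"
      by blast
  qed
qed

lemma corner_qr2:
  assumes ua: "ualg A mone" and eA: "e \<in> A" and ee: "mmul e e = e" and a: "a' \<in> qr (corner e A) e"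
  shows "a' \<in> qr A mone"
proof -
  interpret ualg A mone by (rule ua)
  have ee2: "\<And>X. mmul e (mmul e X) = mmul e X" using ee by (simp add: mmul_assoc[symmetric])
  have aC: "a' \<in> corner e A" and hq: "\<And>b. b \<in> corner e A \<Longrightarrow> \<exists>c\<in>corner e A. mmul c (madd e (msmult (-1) (mmul b a'))) = e"
    using a unfolding qr_def by auto
  obtain a0 where a0: "a0 \<in> A" "a' = mmul (mmul e a0) e" using aC unfolding corner_def by blast
  have aA: "a' \<in> A" using corner_sub[OF ua eA] aC by blast
  show ?thesis unfolding qr_def
  proof (intro CollectI conjI ballI aA)
    fix b assume bA: "b \<in> A"
    have BC: "mmul (mmul e b) e \<in> corner e A" unfolding corner_def using bA by blast
    obtain c' where c': "c' \<in> corner e A" "mmul c' (madd e (msmult (-1) (mmul (mmul (mmul e b) e) a'))) = e"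
      using hq[OF BC] by blast
    obtain c0 where c0: "c0 \<in> A" "c' = mmul (mmul e c0) e" using c'(1) unfolding corner_def by blast
    let ?c1 = "madd c' (madd mone (msmult (-1) e))"
    have c1A: "?c1 \<in> A" using c'(1) corner_sub[OF ua eA] u_in eA add_cl sm_cl by blast
    have h1: "mmul ?c1 (madd mone (msmult (-1) (mmul e (mmul b a')))) = mone"
      using c'(2) unfolding c0(2) a0(2) by (simp add: nrm ee ee2 fun_eq_iff algebra_simps)
    have "mmul (madd mone (mmul (mmul b a') (mmul ?c1 e))) (madd mone (msmult (-1) (mmul (mmul b a') e))) = mone"
      by (rule swap_inv) (simp add: h1 mmul_assoc)
    moreover have "mmul (mmul b a') e = mmul b a'" unfolding a0(2) by (simp add: nrm ee)
    moreover have "madd mone (mmul (mmul b a') (mmul ?c1 e)) \<in> A"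
      using u_in c1A bA aA eA add_cl mul_cl by simp
    ultimately show "\<exists>c\<in>A. mmul c (madd mone (msmult (-1) (mmul b a'))) = mone" by auto
  qed
qed


lemma Estar_diag: "Estar R y a = (\<lambda>u v. if u = v then (if (y, u) \<in> R a then 1 else 0) else 0)"
  by (auto simp: Estar_def fun_eq_iff)

lemma Estar_idem: "mmul (Estar R y a) (Estar R y a) = Estar R y a"
  unfolding Estar_diag mmul_diag_left by (auto simp: fun_eq_iff)

lemma Estar_entry:
  "mmul (mmul (Estar R y a) M) (Estar R y b) i j =
     (if (y, i) \<in> R a then 1 else 0) * M i j * (if (y, j) \<in> R b then 1 else 0)"
  unfolding Estar_diag mmul_diag_left mmul_diag_right by simp

lemma ualg_T: "ualg (terwilliger d R x) mone"
  unfolding terwilliger_def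
  by unfold_locales (auto intro: alg_gen.intros)

theorem proposition5p11:
  fixes d :: nat and R :: "nat \<Rightarrow> ('x::finite \<times> 'x) set" and x :: 'x
  assumes "is_scheme d R"
    and "\<forall>M\<in>jacobson_rad (terwilliger d R x :: ('x, 'f::field) sqm set).
           \<forall>a\<le>d. \<forall>b\<le>d. a \<noteq> b \<longrightarrow> mmul (mmul (Estar R x a) M) (Estar R x b) = mzero"
  shows "semisimple (terwilliger d R x :: ('x, 'f) sqm set) \<longleftrightarrow>
           (\<forall>c\<le>d. semisimple (corner (Estar R x c) (terwilliger d R x :: ('x, 'f) sqm set)))"
proof -
  let ?T = "terwilliger d R x :: ('x, 'f) sqm set"
  have ua: "ualg ?T mone" by (rule ualg_T)
  have JT: "jacobson_rad ?T = qr ?T mone" by (rule ualg.J_eq[OF ua])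
  have EC: "Estar R x c \<in> ?T" if "c \<le> d" for c
    unfolding terwilliger_def using that by (blast intro: alg_gen.gen)
  have uc: "ualg (corner (Estar R x c) ?T) (Estar R x c)" if "c \<le> d" for c
    by (rule ualg_corner[OF ua EC[OF that] Estar_idem])
  have JC: "jacobson_rad (corner (Estar R x c) ?T) = qr (corner (Estar R x c) ?T) (Estar R x c)"
    if "c \<le> d" for c using ualg.J_eq[OF uc[OF that]] .
  show ?thesis
  proof
    assume ss: "semisimple ?T"
    show "\<forall>c\<le>d. semisimple (corner (Estar R x c) ?T)"
    proof (intro allI impI)
      fix c assume c: "c \<le> d"
      have "qr (corner (Estar R x c) ?T) (Estar R x c) \<subseteq> qr ?T mone"
        using corner_qr2[OF ua EC[OF c] Estar_idem] by blast
      also have "\<dots> = {mzero}" using ss JT unfolding semisimple_def by simp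
      finally have "qr (corner (Estar R x c) ?T) (Estar R x c) \<subseteq> {mzero}" .
      moreover have "mzero \<in> qr (corner (Estar R x c) ?T) (Estar R x c)"
        by (rule ualg.zero_qr[OF uc[OF c]])
      ultimately show "semisimple (corner (Estar R x c) ?T)"
        unfolding semisimple_def JC[OF c] by blast
    qed
  next
    assume ss: "\<forall>c\<le>d. semisimple (corner (Estar R x c) ?T)"
    have un: "(\<Union>a\<in>{..d}. R a) = UNIV" using assms(1) unfolding is_scheme_def by blast
    have "M = mzero" if M: "M \<in> jacobson_rad ?T" for M
    proof (intro ext)
      fix i j
      obtain a where a: "a \<le> d" "(x, i) \<in> R a" using un by blast
      obtain b where b: "b \<le> d" "(x, j) \<in> R b" using un by blast
      have key: "mmul (mmul (Estar R x a) M) (Estar R x b) = mzero"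
      proof (cases "a = b")
        case True
        have "M \<in> qr ?T mone" using M JT by simp
        hence "mmul (mmul (Estar R x a) M) (Estar R x a) \<in> qr (corner (Estar R x a) ?T) (Estar R x a)"
          by (rule corner_qr1[OF ua EC[OF a(1)] Estar_idem])
        hence "mmul (mmul (Estar R x a) M) (Estar R x a) \<in> jacobson_rad (corner (Estar R x a) ?T)"
          using JC[OF a(1)] by simp
        thus ?thesis using ss a(1) True unfolding semisimple_def by auto
      next
        case False
        thus ?thesis using assms(2) M a(1) b(1) by blast
      qed
      have "mmul (mmul (Estar R x a) M) (Estar R x b) i j = 0" using key by simp
      thus "M i j = mzero i j" using a b by (simp add: Estar_entry)
    qed
    moreover have "mzero \<in> jacobson_rad ?T" using JT ualg.zero_qr[OF ua] by simp
    ultimately show "semisimple ?T" unfolding semisimple_def by blast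
  qed
qed

end
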